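(* Let $T\in\mathcal{T}$, let $v_1,v_2\in A_T$ with $N_T(v_1)=\{u_1,u_2,u_5\}$ and $N_T(v_2)=\{u_3,u_4,u_5\}$, and let $T'$ arise from $T$ by contracting all six edges incident with $v_1$ or $v_2$ into a single new vertex $w$. Then $T'\in\mathcal{T}$, $D_{T'}=\{w\}\cup (D_T\setminus (N_T(v_1)\cup N_T(v_2)))$, and $A_{T'}=A_T\setminus\{v_1,v_2\}$.
   Context: Gallai–Edmonds sets: for a graph $G$, $D_G$ is the set of vertices not covered by at least one maximum matching, $A_G=N_G(D_G)\setminus D_G$, $C_G=V(G)\setminus(A_G\cup D_G)$. $\nu$ denotes the matching number, $n(T)$ the number of vertices. $\mathcal{T}$ is the set of all trees $T$ such that every vertex of $A_T$ has degree at most $3$ in $T$ and $\nu(T)=\frac{n(T)-1}{3}$. *)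

theory Defs
  imports Complex_Main
begin

definition graph :: "'a set \<Rightarrow> 'a set set \<Rightarrow> bool" where
  "graph V E \<longleftrightarrow> finite V \<and> (\<forall>e\<in>E. \<exists>u v. e = {u, v} \<and> u \<noteq> v \<and> u \<in> V \<and> v \<in> V)"

definition nbrs :: "'a set set \<Rightarrow> 'a \<Rightarrow> 'a set" where
  "nbrs E v = {u. {u, v} \<in> E}"

definition deg :: "'a set set \<Rightarrow> 'a \<Rightarrow> nat" where
  "deg E v = card (nbrs E v)"

definition connected_graph :: "'a set \<Rightarrow> 'a set set \<Rightarrow> bool" where
  "connected_graph V E \<longleftrightarrow> V \<noteq> {} \<and>
     (\<forall>u\<in>V. \<forall>v\<in>V. (\<lambda>x y. {x, y} \<in> E)\<^sup>*\<^sup>* u v)"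

definition is_cycle :: "'a set set \<Rightarrow> 'a list \<Rightarrow> bool" where
  "is_cycle E xs \<longleftrightarrow> length xs \<ge> 3 \<and> distinct xs \<and>
     (\<forall>i < length xs. {xs ! i, xs ! ((i + 1) mod length xs)} \<in> E)"

definition tree :: "'a set \<Rightarrow> 'a set set \<Rightarrow> bool" where
  "tree V E \<longleftrightarrow> graph V E \<and> connected_graph V E \<and> \<not> (\<exists>xs. is_cycle E xs)"

definition matching :: "'a set set \<Rightarrow> 'a set set \<Rightarrow> bool" where
  "matching E M \<longleftrightarrow> M \<subseteq> E \<and> (\<forall>e1\<in>M. \<forall>e2\<in>M. e1 \<noteq> e2 \<longrightarrow> e1 \<inter> e2 = {})"

definition nu :: "'a set set \<Rightarrow> nat" where
  "nu E = Max {card M | M. matching E M}"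

definition max_matching :: "'a set set \<Rightarrow> 'a set set \<Rightarrow> bool" where
  "max_matching E M \<longleftrightarrow> matching E M \<and> card M = nu E"

definition D_set :: "'a set \<Rightarrow> 'a set set \<Rightarrow> 'a set" where
  "D_set V E = {v \<in> V. \<exists>M. max_matching E M \<and> v \<notin> \<Union>M}"

definition A_set :: "'a set \<Rightarrow> 'a set set \<Rightarrow> 'a set" where
  "A_set V E = (\<Union>v\<in>D_set V E. nbrs E v) - D_set V E"

definition C_set :: "'a set \<Rightarrow> 'a set set \<Rightarrow> 'a set" where
  "C_set V E = V - (A_set V E \<union> D_set V E)"

definition class_T :: "'a set \<Rightarrow> 'a set set \<Rightarrow> bool" where
  "class_T V E \<longleftrightarrow> tree V E \<and> (\<forall>v\<in>A_set V E. deg E v \<le> 3) \<and>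
     real (nu E) = (real (card V) - 1) / 3"

definition contract_V :: "'a set \<Rightarrow> 'a set \<Rightarrow> 'a \<Rightarrow> 'a set" where
  "contract_V V S w = (V - S) \<union> {w}"

definition contract_E :: "'a set \<Rightarrow> 'a set set \<Rightarrow> 'a set \<Rightarrow> 'a \<Rightarrow> 'a set set" where
  "contract_E V E S w = {e \<in> E. e \<inter> S = {}} \<union>
     {{w, x} | x. x \<in> V - S \<and> (\<exists>y\<in>S. {x, y} \<in> E)}"

end

theory Submission
  imports Defs
begin


definition path :: "'a set set \<Rightarrow> 'a list \<Rightarrow> bool" where
  "path E xs \<longleftrightarrow> distinct xs \<and> (\<forall>i. Suc i < length xs \<longrightarrow> {xs!i, xs!(Suc i)} \<in> E)"

lemma graph_edge: "graph V E \<Longrightarrow> {a,b} \<in> E \<Longrightarrow> a \<noteq> b \<and> a \<in> V \<and> b \<in> V"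
proof -
  assume g: "graph V E" and e: "{a,b} \<in> E"
  then obtain u v where "{a,b} = {u,v}" "u \<noteq> v" "u \<in> V" "v \<in> V" unfolding graph_def by blast
  thus ?thesis by (auto simp: doubleton_eq_iff)
qed

lemma graph_finE: "graph V E \<Longrightarrow> finite E"
proof -
  assume g: "graph V E"
  have "E \<subseteq> Pow V"
  proof
    fix e assume "e \<in> E"
    then obtain u v where "e = {u,v}" "u \<in> V" "v \<in> V" using g unfolding graph_def by blast
    thus "e \<in> Pow V" by auto
  qed
  moreover have "finite V" using g unfolding graph_def by blast
  ultimately show ?thesis by (meson finite_Pow_iff rev_finite_subset)
qed

lemma leaf_exists:
  assumes g: "graph V E" and ac: "\<not> (\<exists>xs. is_cycle E xs)" and ne: "E \<noteq> {}"
  shows "\<exists>x p. nbrs E x = {p}"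
proof -
  let ?P = "\<lambda>n. \<exists>xs. path E xs \<and> set xs \<subseteq> V \<and> length xs = n"
  obtain e where e: "e \<in> E" using ne by blast
  then obtain a b where ab: "e = {a,b}" "a \<noteq> b" "a \<in> V" "b \<in> V" using g unfolding graph_def by blast
  have "path E [a,b]" using ab e unfolding path_def by (auto simp: less_Suc_eq)
  hence P2: "?P 2" using ab by (intro exI[of _ "[a,b]"]) auto
  have fV: "finite V" using g unfolding graph_def by blast
  have bnd: "\<forall>n. ?P n \<longrightarrow> n \<le> card V"
  proof (intro allI impI)
    fix n assume "?P n"
    then obtain xs where "path E xs" "set xs \<subseteq> V" "length xs = n" by blast
    hence "card (set xs) = n" using distinct_card[of xs] unfolding path_def by simp
    thus "n \<le> card V" using card_mono[OF fV \<open>set xs \<subseteq> V\<close>] by simp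
  qed
  obtain m where m: "?P m" "\<forall>n. ?P n \<longrightarrow> n \<le> m" using Nat.ex_has_greatest_nat[OF P2 bnd] by blast
  then obtain xs where xs: "path E xs" "set xs \<subseteq> V" "length xs = m" by blast
  have m2: "m \<ge> 2" using m(2) P2 by blast
  have d: "distinct xs" using xs unfolding path_def by blast
  have ed: "\<And>i. Suc i < length xs \<Longrightarrow> {xs!i, xs!(Suc i)} \<in> E" using xs unfolding path_def by blast
  have e01: "{xs!0, xs!1} \<in> E" using ed[of 0] xs m2 by auto
  have "nbrs E (xs!0) = {xs!1}"
  proof
    show "{xs!1} \<subseteq> nbrs E (xs!0)" using e01 unfolding nbrs_def by (simp add: insert_commute)
  next
    show "nbrs E (xs!0) \<subseteq> {xs!1}"
    proof
      fix y assume y: "y \<in> nbrs E (xs!0)"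
      hence yE: "{y, xs!0} \<in> E" unfolding nbrs_def by auto
      have yx: "y \<noteq> xs!0" "y \<in> V" using graph_edge[OF g yE] by auto
      show "y \<in> {xs!1}"
      proof (rule ccontr)
        assume ny: "y \<notin> {xs!1}"
        show False
        proof (cases "y \<in> set xs")
          case False
          have "path E (y # xs)" unfolding path_def
          proof (intro conjI allI impI)
            show "distinct (y#xs)" using False d by simp
          next
            fix i assume i: "Suc i < length (y#xs)"
            show "{(y#xs)!i, (y#xs)!(Suc i)} \<in> E"
            proof (cases i)
              case 0 thus ?thesis using yE by simp
            next
              case (Suc j) thus ?thesis using ed[of j] i by simp
            qed
          qed
          hence "?P (Suc m)" using xs yx False by (intro exI[of _ "y#xs"]) auto
          thus False using m(2) Suc_n_not_le_n by blast
        next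
          case True
          then obtain j where j: "j < length xs" "xs!j = y" by (meson in_set_conv_nth)
          have "j \<noteq> 0" using j yx by (metis)
          moreover have "j \<noteq> 1" using j ny by auto
          ultimately have j2: "j \<ge> 2" by arith
          let ?c = "take (Suc j) xs"
          have lc: "length ?c = Suc j" using j by simp
          have "is_cycle E ?c" unfolding is_cycle_def
          proof (intro conjI allI impI)
            show "3 \<le> length ?c" using lc j2 by simp
            show "distinct ?c" using d by simp
          next
            fix i assume i: "i < length ?c"
            show "{?c ! i, ?c ! ((i + 1) mod length ?c)} \<in> E"
            proof (cases "i = j")
              case True
              hence "(i+1) mod length ?c = 0" using lc by simp
              thus ?thesis using True j yE lc by (simp add: insert_commute)
            next
              case False
              hence "i < j" using i lc by simp
              hence "(i+1) mod length ?c = Suc i" using lc by simp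
              thus ?thesis using ed[of i] \<open>i<j\<close> j by simp
            qed
          qed
          thus False using ac by blast
        qed
      qed
    qed
  qed
  thus ?thesis by blast
qed

abbreviation adj :: "'a set set \<Rightarrow> 'a \<Rightarrow> 'a \<Rightarrow> bool" where
  "adj E \<equiv> (\<lambda>x y. {x, y} \<in> E)"

lemma adj_sym_rtrancl: "(adj E)\<^sup>*\<^sup>* x y \<Longrightarrow> (adj E)\<^sup>*\<^sup>* y x"
proof (induction rule: rtranclp_induct)
  case base then show ?case by simp
next
  case (step y z)
  have "adj E z y" using step(2) by (simp add: insert_commute)
  then show ?case using step(3) by (meson converse_rtranclp_into_rtranclp)
qed

lemma rtrancl_mono_edges:
  assumes "(adj E)\<^sup>*\<^sup>* x y" and "\<And>a b. {a,b} \<in> E \<Longrightarrow> (adj F)\<^sup>*\<^sup>* a b"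
  shows "(adj F)\<^sup>*\<^sup>* x y"
  using assms(1)
proof (induction rule: rtranclp_induct)
  case base then show ?case by simp
next
  case (step y z) then show ?case using assms(2)[of y z] by (meson rtranclp_trans)
qed

lemma leaf_edges:
  assumes g: "graph V E" and l: "nbrs E l = {p}"
  shows "{e \<in> E. l \<notin> e} = E - {{l,p}}" and "{l,p} \<in> E" and "l \<noteq> p" and "l \<in> V" and "p \<in> V"
proof -
  show lp: "{l,p} \<in> E" using l unfolding nbrs_def by (auto simp: insert_commute)
  thus "l \<noteq> p" "l \<in> V" "p \<in> V" using graph_edge[OF g] by auto
  show "{e \<in> E. l \<notin> e} = E - {{l,p}}"
  proof (rule set_eqI, rule iffI)
    fix e assume "e \<in> {e \<in> E. l \<notin> e}" thus "e \<in> E - {{l,p}}" by auto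
  next
    fix e assume e: "e \<in> E - {{l,p}}"
    then obtain a b where ab: "e = {a,b}" using g unfolding graph_def by blast
    have "l \<notin> e"
    proof
      assume "l \<in> e"
      then obtain x where "e = {l, x}" using ab by auto
      hence "x \<in> nbrs E l" using e unfolding nbrs_def by (auto simp: insert_commute)
      hence "x = p" using l by auto
      thus False using e \<open>e = {l,x}\<close> by auto
    qed
    thus "e \<in> {e \<in> E. l \<notin> e}" using e by auto
  qed
qed

lemma graph_sub: "graph V E \<Longrightarrow> F \<subseteq> E \<Longrightarrow> graph V F"
  unfolding graph_def by blast

lemma graph_remove_leaf:
  assumes g: "graph V E" and l: "nbrs E l = {p}"
  shows "graph (V - {l}) {e \<in> E. l \<notin> e}"
  unfolding graph_def
proof (intro conjI ballI)
  show "finite (V - {l})" using g unfolding graph_def by auto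
next
  fix e assume e: "e \<in> {e \<in> E. l \<notin> e}"
  then obtain u v where "e = {u,v}" "u \<noteq> v" "u \<in> V" "v \<in> V" using g unfolding graph_def by blast
  thus "\<exists>u v. e = {u, v} \<and> u \<noteq> v \<and> u \<in> V - {l} \<and> v \<in> V - {l}" using e by auto
qed

lemma cycle_mono: "is_cycle F xs \<Longrightarrow> F \<subseteq> E \<Longrightarrow> is_cycle E xs"
  unfolding is_cycle_def by (meson subsetD)

lemma acyc_sub: "\<not> (\<exists>xs. is_cycle E xs) \<Longrightarrow> F \<subseteq> E \<Longrightarrow> \<not> (\<exists>xs. is_cycle F xs)"
  using cycle_mono by blast

lemma card_remove_leaf:
  assumes g: "graph V E" and l: "nbrs E l = {p}"
  shows "card {e \<in> E. l \<notin> e} + 1 = card E"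
proof -
  have f: "finite E" using graph_finE[OF g] .
  show ?thesis using leaf_edges[OF g l] f
    by (metis Suc_eq_plus1 card_Suc_Diff1)
qed

lemma forest_card:
  assumes "graph V E" "\<not> (\<exists>xs. is_cycle E xs)" "V \<noteq> {}"
  shows "card E + 1 \<le> card V"
  using assms
proof (induction "card V" arbitrary: V E rule: less_induct)
  case less
  have fV: "finite V" using less(2) unfolding graph_def by blast
  show ?case
  proof (cases "E = {}")
    case True thus ?thesis using less(4) fV by (simp add: Suc_leI card_gt_0_iff)
  next
    case False
    then obtain l p where l: "nbrs E l = {p}" using leaf_exists[OF less(2) less(3)] by blast
    note le = leaf_edges[OF less(2) l]
    let ?V = "V - {l}" and ?E = "{e \<in> E. l \<notin> e}"
    have cV: "card ?V + 1 = card V"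
    proof -
      have "card V > 0" using fV le(4) card_gt_0_iff by blast
      thus ?thesis using card_Diff_singleton[OF le(4)] by linarith
    qed
    have "card ?V < card V" using cV by simp
    moreover have "graph ?V ?E" using graph_remove_leaf[OF less(2) l] .
    moreover have "\<not> (\<exists>xs. is_cycle ?E xs)" using acyc_sub[OF less(3), of ?E] by blast
    moreover have "?V \<noteq> {}" using le(3,5) by blast
    ultimately have IH: "card ?E + 1 \<le> card ?V" using less(1)[of ?V ?E] by blast
    show ?thesis using IH cV card_remove_leaf[OF less(2) l] by simp
  qed
qed

lemma conn_remove_leaf:
  assumes g: "graph V E" and c: "connected_graph V E" and l: "nbrs E l = {p}"
  shows "connected_graph (V - {l}) {e \<in> E. l \<notin> e}"
proof -
  note le = leaf_edges[OF g l]
  let ?E = "{e \<in> E. l \<notin> e}"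
  have key: "(adj E)\<^sup>*\<^sup>* a y \<Longrightarrow> a \<noteq> l \<Longrightarrow> (y \<noteq> l \<longrightarrow> (adj ?E)\<^sup>*\<^sup>* a y) \<and> (y = l \<longrightarrow> (adj ?E)\<^sup>*\<^sup>* a p)" for a y
  proof (induction rule: rtranclp_induct)
    case base then show ?case by simp
  next
    case (step x y)
    show ?case
    proof (cases "y = l")
      case True
      hence "x \<in> nbrs E l" using step(2) unfolding nbrs_def by simp
      hence "x = p" using l by simp
      thus ?thesis using step le True by auto
    next
      case False
      show ?thesis
      proof (cases "x = l")
        case True
        hence "y \<in> nbrs E l" using step(2) unfolding nbrs_def by (simp add: insert_commute)
        hence "y = p" using l by simp
        thus ?thesis using step True by auto
      next
        case False
        hence "adj ?E x y" using step(2) \<open>y \<noteq> l\<close> by simp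
        thus ?thesis using step False \<open>y \<noteq> l\<close> by (meson rtranclp.rtrancl_into_rtrancl)
      qed
    qed
  qed
  show ?thesis unfolding connected_graph_def
  proof (intro conjI ballI)
    show "V - {l} \<noteq> {}" using le by blast
  next
    fix u v assume "u \<in> V - {l}" "v \<in> V - {l}"
    thus "(adj ?E)\<^sup>*\<^sup>* u v" using key[of u v] c unfolding connected_graph_def by blast
  qed
qed

lemma rtrancl_empty_adj: "(adj {})\<^sup>*\<^sup>* a b \<Longrightarrow> a = b"
  by (induction rule: rtranclp_induct) auto

lemma tree_card:
  assumes "tree V E"
  shows "card E + 1 = card V"
  using assms
proof (induction "card V" arbitrary: V E rule: less_induct)
  case less
  have g: "graph V E" and c: "connected_graph V E" and ac: "\<not> (\<exists>xs. is_cycle E xs)"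
    using less(2) unfolding tree_def by auto
  have fV: "finite V" using g unfolding graph_def by blast
  show ?case
  proof (cases "E = {}")
    case True
    have "card V \<le> 1"
    proof (rule ccontr)
      assume "\<not> card V \<le> 1"
      then obtain a b where "a \<in> V" "b \<in> V" "a \<noteq> b"
        using card_le_Suc0_iff_eq[OF fV] by auto
      moreover have "(adj E)\<^sup>*\<^sup>* a b" using c \<open>a \<in> V\<close> \<open>b \<in> V\<close> unfolding connected_graph_def by blast
      ultimately show False using True rtrancl_empty_adj by metis
    qed
    moreover have "V \<noteq> {}" using c unfolding connected_graph_def by blast
    hence "card V \<noteq> 0" using fV by simp
    ultimately show ?thesis using True by simp
  next
    case False
    then obtain l p where l: "nbrs E l = {p}" using leaf_exists[OF g ac] by blast
    note le = leaf_edges[OF g l]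
    let ?V = "V - {l}" and ?E = "{e \<in> E. l \<notin> e}"
    have cV: "card ?V + 1 = card V"
    proof -
      have "card V > 0" using fV le(4) card_gt_0_iff by blast
      thus ?thesis using card_Diff_singleton[OF le(4)] by linarith
    qed
    have "card ?V < card V" using cV by simp
    moreover have "tree ?V ?E" unfolding tree_def
      using graph_remove_leaf[OF g l] conn_remove_leaf[OF g c l] acyc_sub[OF ac, of ?E] by simp
    ultimately have IH: "card ?E + 1 = card ?V" using less(1)[of ?V ?E] by blast
    show ?thesis using IH cV card_remove_leaf[OF g l] by simp
  qed
qed


lemma cycle_walk:
  assumes cy: "is_cycle E xs"
  shows "(adj (E - {{xs!0, xs!1}}))\<^sup>*\<^sup>* (xs!1) (xs!0)"
proof -
  let ?k = "length xs" and ?F = "E - {{xs!0, xs!1}}"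
  have k3: "?k \<ge> 3" and d: "distinct xs" and ed: "\<And>i. i < ?k \<Longrightarrow> {xs ! i, xs ! ((i + 1) mod ?k)} \<in> E"
    using cy unfolding is_cycle_def by auto
  have ne: "xs!i \<noteq> xs!j" if "i < ?k" "j < ?k" "i \<noteq> j" for i j
    using d that by (simp add: nth_eq_iff_index_eq)
  have step: "\<forall>j. 1 \<le> j \<longrightarrow> j < ?k \<longrightarrow> (adj ?F)\<^sup>*\<^sup>* (xs!1) (xs!j)"
  proof (intro allI)
    fix j show "1 \<le> j \<longrightarrow> j < ?k \<longrightarrow> (adj ?F)\<^sup>*\<^sup>* (xs!1) (xs!j)"
    proof (induction j)
      case 0 then show ?case by simp
    next
      case (Suc j)
      show ?case
      proof (intro impI)
        assume a: "1 \<le> Suc j" "Suc j < ?k"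
        show "(adj ?F)\<^sup>*\<^sup>* (xs!1) (xs!Suc j)"
        proof (cases "j = 0")
          case True then show ?thesis by simp
        next
          case False
          have IH: "(adj ?F)\<^sup>*\<^sup>* (xs!1) (xs!j)" using Suc.IH False a by simp
          have "(j + 1) mod ?k = Suc j" using a by simp
          hence e1: "{xs!j, xs!Suc j} \<in> E" using ed[of j] a by simp
          have "0 < ?k" using k3 by linarith
          hence "xs!Suc j \<noteq> xs!0" using ne[of "Suc j" 0] a by blast
          moreover have "xs!Suc j \<noteq> xs!1" using ne[of "Suc j" 1] a False by simp
          ultimately have "{xs!j, xs!Suc j} \<noteq> {xs!0, xs!1}" by (auto simp: doubleton_eq_iff)
          hence "adj ?F (xs!j) (xs!Suc j)" using e1 by simp
          thus ?thesis using IH by (meson rtranclp.rtrancl_into_rtrancl)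
        qed
      qed
    qed
  qed
  have last: "(adj ?F)\<^sup>*\<^sup>* (xs!1) (xs!(?k - 1))" using step k3 by simp
  have "(?k - 1) + 1 = ?k" using k3 by linarith
  hence "((?k - 1) + 1) mod ?k = 0" by simp
  hence e1: "{xs!(?k-1), xs!0} \<in> E" using ed[of "?k - 1"] k3 by simp
  have kk: "?k - 1 < ?k" "0 < ?k" "1 < ?k" "?k - 1 \<noteq> 0" "?k - 1 \<noteq> 1" using k3 by linarith+
  have "xs!(?k-1) \<noteq> xs!0" "xs!(?k-1) \<noteq> xs!1" using ne[OF kk(1) kk(2) kk(4)] ne[OF kk(1) kk(3) kk(5)] by auto
  hence "{xs!(?k-1), xs!0} \<noteq> {xs!0, xs!1}" by (auto simp: doubleton_eq_iff)
  hence "adj ?F (xs!(?k-1)) (xs!0)" using e1 by simp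
  thus ?thesis using last by (meson rtranclp.rtrancl_into_rtrancl)
qed

lemma conn_remove_cycle_edge:
  assumes c: "connected_graph V E" and cy: "is_cycle E xs"
  shows "connected_graph V (E - {{xs!0, xs!1}})"
proof -
  let ?F = "E - {{xs!0, xs!1}}"
  have W: "(adj ?F)\<^sup>*\<^sup>* (xs!1) (xs!0)" using cycle_walk[OF cy] .
  have edge: "(adj ?F)\<^sup>*\<^sup>* a b" if "{a,b} \<in> E" for a b
  proof (cases "{a,b} = {xs!0, xs!1}")
    case True
    then consider "a = xs!0" "b = xs!1" | "a = xs!1" "b = xs!0" by (auto simp: doubleton_eq_iff)
    then show ?thesis using W adj_sym_rtrancl by metis
  next
    case False then show ?thesis using that by (simp add: r_into_rtranclp)
  qed
  show ?thesis using c unfolding connected_graph_def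
    using rtrancl_mono_edges[OF _ edge] by blast
qed

lemma cycle_edge0: "is_cycle E xs \<Longrightarrow> {xs!0, xs!1} \<in> E"
proof -
  assume cy: "is_cycle E xs"
  have k: "length xs \<ge> 3" using cy unfolding is_cycle_def by blast
  have ed: "\<forall>i < length xs. {xs ! i, xs ! ((i + 1) mod length xs)} \<in> E" using cy unfolding is_cycle_def by blast
  have "0 < length xs" using k by linarith
  hence "{xs ! 0, xs ! ((0 + 1) mod length xs)} \<in> E" using ed by blast
  moreover have "(0 + 1) mod length xs = 1" using k by simp
  ultimately show ?thesis by simp
qed

lemma conn_card:
  assumes "graph V E" "connected_graph V E"
  shows "card V \<le> card E + 1"
  using assms
proof (induction "card E" arbitrary: E rule: less_induct)
  case less
  show ?case
  proof (cases "\<exists>xs. is_cycle E xs")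
    case False
    thus ?thesis using tree_card[of V E] less(2,3) unfolding tree_def by simp
  next
    case True
    then obtain xs where cy: "is_cycle E xs" by blast
    let ?e = "{xs!0, xs!1}" let ?F = "E - {?e}"
    have eE: "?e \<in> E" using cycle_edge0[OF cy] .
    have fE: "finite E" using graph_finE[OF less(2)] .
    have cF: "card ?F + 1 = card E"
    proof -
      have "card E > 0" using fE eE card_gt_0_iff by blast
      thus ?thesis using card_Diff_singleton[OF eE] by linarith
    qed
    have "graph V ?F" using graph_sub[OF less(2), of ?F] by blast
    moreover have "connected_graph V ?F" using conn_remove_cycle_edge[OF less(3) cy] .
    moreover have "card ?F < card E" using cF by simp
    ultimately have "card V \<le> card ?F + 1" using less(1)[of ?F] by blast
    thus ?thesis using cF by simp
  qed
qed

lemma conn_acyclic: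
  assumes g: "graph V E" and c: "connected_graph V E" and cd: "card E + 1 \<le> card V"
  shows "\<not> (\<exists>xs. is_cycle E xs)"
proof
  assume "\<exists>xs. is_cycle E xs"
  then obtain xs where cy: "is_cycle E xs" by blast
  let ?e = "{xs!0, xs!1}" let ?F = "E - {?e}"
  have eE: "?e \<in> E" using cycle_edge0[OF cy] .
  have fE: "finite E" using graph_finE[OF g] .
  have cF: "card ?F + 1 = card E"
  proof -
    have "card E > 0" using fE eE card_gt_0_iff by blast
    thus ?thesis using card_Diff_singleton[OF eE] by linarith
  qed
  have "card V \<le> card ?F + 1" using conn_card[OF graph_sub[OF g, of ?F] conn_remove_cycle_edge[OF c cy]] by blast
  thus False using cF cd by simp
qed



definition cover :: "'a set set \<Rightarrow> 'a set \<Rightarrow> bool" where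
  "cover E K \<longleftrightarrow> (\<forall>e\<in>E. e \<inter> K \<noteq> {})"

lemma matchings_finite: "finite E \<Longrightarrow> finite {M. matching E M}"
  unfolding matching_def by (rule finite_subset[of _ "Pow E"]) auto

lemma nu_ge: "finite E \<Longrightarrow> matching E M \<Longrightarrow> card M \<le> nu E"
proof -
  assume f: "finite E" and m: "matching E M"
  have "finite {card M |M. matching E M}"
    using matchings_finite[OF f] by (simp add: setcompr_eq_image)
  thus ?thesis unfolding nu_def using m by (intro Max_ge) auto
qed

lemma nu_ex: "finite E \<Longrightarrow> \<exists>M. matching E M \<and> card M = nu E"
proof -
  assume f: "finite E"
  have fin: "finite {card M |M. matching E M}"
    using matchings_finite[OF f] by (simp add: setcompr_eq_image)
  have "matching E {}" unfolding matching_def by simp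
  hence ne: "{card M |M. matching E M} \<noteq> {}" by blast
  have "nu E \<in> {card M |M. matching E M}" unfolding nu_def using Max_in[OF fin ne] .
  hence "\<exists>M. nu E = card M \<and> matching E M" by simp
  thus ?thesis by metis
qed

lemma matching_fin: "finite E \<Longrightarrow> matching E M \<Longrightarrow> finite M"
  unfolding matching_def using finite_subset by blast

lemma matching_cover:
  assumes m: "matching E M" and c: "cover E K" and fK: "finite K"
  shows "card M \<le> card (K \<inter> \<Union>M)"
proof -
  define f where "f e = (SOME x. x \<in> e \<inter> K)" for e
  have fin: "\<And>e. e \<in> M \<Longrightarrow> f e \<in> e \<inter> K"
  proof -
    fix e assume "e \<in> M"
    hence "e \<in> E" using m unfolding matching_def by blast
    hence "e \<inter> K \<noteq> {}" using c unfolding cover_def by blast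
    then obtain y where "y \<in> e \<inter> K" by blast
    thus "f e \<in> e \<inter> K" unfolding f_def by (rule someI)
  qed
  have inj: "inj_on f M"
  proof (rule inj_onI)
    fix a b assume ab: "a \<in> M" "b \<in> M" "f a = f b"
    have "f a \<in> a" using fin[OF ab(1)] by blast
    moreover have "f a \<in> b" using fin[OF ab(2)] ab(3) by simp
    ultimately have "a \<inter> b \<noteq> {}" by blast
    moreover have "\<forall>e1\<in>M. \<forall>e2\<in>M. e1 \<noteq> e2 \<longrightarrow> e1 \<inter> e2 = {}" using m unfolding matching_def by simp
    ultimately show "a = b" using ab(1,2) by blast
  qed
  have "f ` M \<subseteq> K \<inter> \<Union>M" using fin by blast
  moreover have "finite (K \<inter> \<Union>M)" using fK by simp
  ultimately have "card (f ` M) \<le> card (K \<inter> \<Union>M)" by (simp add: card_mono)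
  thus ?thesis using card_image[OF inj] by simp
qed

lemma konig:
  assumes "graph V E" "\<not> (\<exists>xs. is_cycle E xs)"
  shows "\<exists>K. cover E K \<and> finite K \<and> card K \<le> nu E"
  using assms
proof (induction "card E" arbitrary: E rule: less_induct)
  case less
  have fE: "finite E" using graph_finE[OF less(2)] .
  show ?case
  proof (cases "E = {}")
    case True thus ?thesis by (intro exI[of _ "{}"]) (simp add: cover_def)
  next
    case False
    then obtain l p where l: "nbrs E l = {p}" using leaf_exists[OF less(2) less(3)] by blast
    note le = leaf_edges[OF less(2) l]
    let ?E = "{e \<in> E. p \<notin> e}"
    have sub: "?E \<subseteq> E - {{l,p}}" by blast
    have "card ?E \<le> card (E - {{l,p}})" using sub fE by (simp add: card_mono)
    moreover have "card (E - {{l,p}}) < card E" using fE le(2) by (meson card_Diff1_less)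
    ultimately have lt: "card ?E < card E" by linarith
    have g0: "graph V ?E" using graph_sub[OF less(2), of ?E] by blast
    have a0: "\<not> (\<exists>xs. is_cycle ?E xs)" using acyc_sub[OF less(3), of ?E] by blast
    obtain K0 where K0: "cover ?E K0" "finite K0" "card K0 \<le> nu ?E" using less(1)[OF lt g0 a0] by blast
    have fE0: "finite ?E" using fE by simp
    obtain M0 where M0: "matching ?E M0" "card M0 = nu ?E" using nu_ex[OF fE0] by blast
    have fM0: "finite M0" using matching_fin[OF fE0 M0(1)] .
    have lnot: "l \<notin> \<Union>M0"
    proof
      assume "l \<in> \<Union>M0"
      then obtain e where e: "e \<in> M0" "l \<in> e" by blast
      hence "e \<in> E" "p \<notin> e" using M0(1) unfolding matching_def by auto
      hence "e \<in> {e \<in> E. l \<notin> e}" using le(1) by blast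
      thus False using e by blast
    qed
    have pnot: "p \<notin> \<Union>M0" using M0(1) unfolding matching_def by blast
    have "matching E (insert {l,p} M0)" unfolding matching_def
    proof (intro conjI ballI impI)
      show "insert {l, p} M0 \<subseteq> E" using le(2) M0(1) unfolding matching_def by blast
    next
      fix e1 e2 assume e: "e1 \<in> insert {l, p} M0" "e2 \<in> insert {l, p} M0" "e1 \<noteq> e2"
      show "e1 \<inter> e2 = {}"
      proof (cases "e1 = {l,p}")
        case True
        hence "e2 \<in> M0" using e by blast
        thus ?thesis using True lnot pnot by blast
      next
        case False
        hence e1M: "e1 \<in> M0" using e by blast
        show ?thesis
        proof (cases "e2 = {l,p}")
          case True thus ?thesis using e1M lnot pnot by blast
        next
          case False
          hence "e2 \<in> M0" using e by blast
          thus ?thesis using e1M e(3) M0(1) unfolding matching_def by blast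
        qed
      qed
    qed
    hence "card (insert {l,p} M0) \<le> nu E" using nu_ge[OF fE] by blast
    moreover have "{l,p} \<notin> M0" using pnot by blast
    ultimately have "card M0 + 1 \<le> nu E" using fM0 by simp
    moreover have "cover E (insert p K0)" unfolding cover_def
    proof
      fix e assume "e \<in> E"
      show "e \<inter> insert p K0 \<noteq> {}"
      proof (cases "p \<in> e")
        case True thus ?thesis by blast
      next
        case False
        hence "e \<in> ?E" using \<open>e \<in> E\<close> by blast
        thus ?thesis using K0(1) unfolding cover_def by blast
      qed
    qed
    moreover have "card (insert p K0) \<le> card K0 + 1" using K0(2) by (simp add: card_insert_if)
    ultimately show ?thesis using K0 M0(2) by (intro exI[of _ "insert p K0"]) auto
  qed
qed

lemma mincover_matched:
  assumes fE: "finite E" and m: "max_matching E M" and c: "cover E K" and fK: "finite K"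
    and cK: "card K = nu E" and x: "x \<in> K"
  shows "x \<in> \<Union>M"
proof (rule ccontr)
  assume nx: "x \<notin> \<Union>M"
  have "card M \<le> card (K \<inter> \<Union>M)" using matching_cover[OF _ c fK] m unfolding max_matching_def by blast
  also have "\<dots> \<le> card (K - {x})" using nx fK by (intro card_mono) auto
  also have "\<dots> < card K" using fK x by (meson card_Diff1_less)
  finally show False using m cK unfolding max_matching_def by simp
qed

lemma cover_ge_nu:
  assumes fE: "finite E" and c: "cover E K" and fK: "finite K"
  shows "nu E \<le> card K"
proof -
  obtain M where M: "matching E M" "card M = nu E" using nu_ex[OF fE] by blast
  have "card M \<le> card (K \<inter> \<Union>M)" using matching_cover[OF M(1) c fK] .
  also have "\<dots> \<le> card K" using fK by (simp add: card_mono)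
  finally show ?thesis using M by simp
qed

lemma D_char:
  assumes g: "graph V E" and ac: "\<not> (\<exists>xs. is_cycle E xs)"
  shows "v \<in> D_set V E \<longleftrightarrow> v \<in> V \<and> (\<forall>K. cover E K \<and> finite K \<and> card K = nu E \<longrightarrow> v \<notin> K)"
proof
  have fE: "finite E" using graph_finE[OF g] .
  assume "v \<in> D_set V E"
  then obtain M where M: "max_matching E M" "v \<notin> \<Union>M" "v \<in> V" unfolding D_set_def by blast
  thus "v \<in> V \<and> (\<forall>K. cover E K \<and> finite K \<and> card K = nu E \<longrightarrow> v \<notin> K)"
    using mincover_matched[OF fE M(1)] by blast
next
  have fE: "finite E" using graph_finE[OF g] .
  assume a: "v \<in> V \<and> (\<forall>K. cover E K \<and> finite K \<and> card K = nu E \<longrightarrow> v \<notin> K)"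
  let ?E = "{e \<in> E. v \<notin> e}"
  have fE0: "finite ?E" using fE by simp
  obtain Kv where Kv: "cover ?E Kv" "finite Kv" "card Kv \<le> nu ?E"
    using konig[OF graph_sub[OF g, of ?E] acyc_sub[OF ac, of ?E]] by blast
  obtain Mv where Mv: "matching ?E Mv" "card Mv = nu ?E" using nu_ex[OF fE0] by blast
  have mE: "matching E Mv" using Mv(1) unfolding matching_def by blast
  have vn: "v \<notin> \<Union>Mv" using Mv(1) unfolding matching_def by blast
  have le: "nu ?E \<le> nu E" using nu_ge[OF fE mE] Mv(2) by simp
  show "v \<in> D_set V E"
  proof (cases "nu ?E = nu E")
    case True
    hence "max_matching E Mv" using mE Mv(2) unfolding max_matching_def by simp
    thus ?thesis unfolding D_set_def using vn a by blast
  next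
    case False
    have cK: "cover E (insert v Kv)" unfolding cover_def
    proof
      fix e assume "e \<in> E"
      show "e \<inter> insert v Kv \<noteq> {}"
      proof (cases "v \<in> e")
        case True thus ?thesis by blast
      next
        case False
        hence "e \<in> ?E" using \<open>e \<in> E\<close> by blast
        thus ?thesis using Kv(1) unfolding cover_def by blast
      qed
    qed
    have fK: "finite (insert v Kv)" using Kv(2) by simp
    have "card (insert v Kv) \<le> card Kv + 1" using Kv(2) by (simp add: card_insert_if)
    hence "card (insert v Kv) \<le> nu E" using Kv(3) le False by linarith
    moreover have "nu E \<le> card (insert v Kv)" using cover_ge_nu[OF fE cK fK] .
    ultimately have "card (insert v Kv) = nu E" by simp
    thus ?thesis using a cK fK by blast
  qed
qed



definition bip :: "'a set \<Rightarrow> 'a set set \<Rightarrow> 'a set \<Rightarrow> 'a set \<Rightarrow> bool" where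
  "bip V E X Y \<longleftrightarrow> tree V E \<and> X \<inter> Y = {} \<and> X \<union> Y = V \<and>
     (\<forall>e\<in>E. \<exists>x\<in>X. \<exists>y\<in>Y. e = {x,y}) \<and> (\<forall>x\<in>X. deg E x = 3)"

lemma bipD:
  assumes "bip V E X Y"
  shows "tree V E" "X \<inter> Y = {}" "X \<union> Y = V" "\<And>e. e \<in> E \<Longrightarrow> \<exists>x\<in>X. \<exists>y\<in>Y. e = {x,y}"
    "\<And>x. x \<in> X \<Longrightarrow> deg E x = 3" "graph V E" "\<not> (\<exists>xs. is_cycle E xs)" "connected_graph V E"
  using assms unfolding bip_def tree_def by simp_all

lemma star_card:
  assumes g: "graph V E"
  shows "card {e \<in> E. x \<in> e} = deg E x"
proof -
  have eq: "{e \<in> E. x \<in> e} = (\<lambda>y. {y,x}) ` nbrs E x"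
  proof (rule set_eqI, rule iffI)
    fix e assume e: "e \<in> {e \<in> E. x \<in> e}"
    then obtain a b where ab: "e = {a,b}" using g unfolding graph_def by blast
    show "e \<in> (\<lambda>y. {y,x}) ` nbrs E x"
    proof (cases "a = x")
      case True
      hence "e = {b,x}" using ab by (simp add: insert_commute)
      moreover hence "b \<in> nbrs E x" using e unfolding nbrs_def by simp
      ultimately show ?thesis by blast
    next
      case False
      hence "b = x" using e ab by auto
      hence "e = {a,x}" using ab by simp
      moreover hence "a \<in> nbrs E x" using e unfolding nbrs_def by simp
      ultimately show ?thesis by blast
    qed
  next
    fix e assume "e \<in> (\<lambda>y. {y,x}) ` nbrs E x"
    thus "e \<in> {e \<in> E. x \<in> e}" unfolding nbrs_def by auto
  qed
  have inj: "inj_on (\<lambda>y. {y,x}) (nbrs E x)"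
  proof (rule inj_onI)
    fix a b assume ab: "a \<in> nbrs E x" "b \<in> nbrs E x" "{a,x} = {b,x}"
    have "a \<noteq> x" "b \<noteq> x" using ab(1,2) graph_edge[OF g] unfolding nbrs_def by auto
    thus "a = b" using ab(3) by (auto simp: doubleton_eq_iff)
  qed
  show ?thesis unfolding deg_def eq using card_image[OF inj] .
qed

lemma bip_edge_other:
  assumes b: "bip V E X Y" and x: "x \<in> X" and e: "{u,x} \<in> E"
  shows "u \<in> Y"
proof -
  obtain x' y' where xy: "x' \<in> X" "y' \<in> Y" "{u,x} = {x',y'}" using bipD(4)[OF b e] by blast
  have "X \<inter> Y = {}" using bipD(2)[OF b] .
  thus ?thesis using xy x by (auto simp: doubleton_eq_iff)
qed

lemma bip_edge_otherY:
  assumes b: "bip V E X Y" and y: "y \<in> Y" and e: "{u,y} \<in> E"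
  shows "u \<in> X"
proof -
  obtain x' y' where xy: "x' \<in> X" "y' \<in> Y" "{u,y} = {x',y'}" using bipD(4)[OF b e] by blast
  have "X \<inter> Y = {}" using bipD(2)[OF b] .
  thus ?thesis using xy y by (auto simp: doubleton_eq_iff)
qed

lemma bip_stars:
  assumes b: "bip V E X Y" and Z: "Z \<subseteq> X"
  shows "card {e \<in> E. e \<inter> Z \<noteq> {}} = 3 * card Z"
proof -
  have g: "graph V E" using bipD(6)[OF b] .
  have fV: "finite V" using g unfolding graph_def by blast
  have XV: "X \<subseteq> V" using bipD(3)[OF b] by blast
  have "Z \<subseteq> V" using Z XV by blast
  hence fZ: "finite Z" using finite_subset fV by auto
  have eq: "{e \<in> E. e \<inter> Z \<noteq> {}} = (\<Union>z\<in>Z. {e \<in> E. z \<in> e})" by blast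
  have disj: "\<forall>a\<in>Z. \<forall>c\<in>Z. a \<noteq> c \<longrightarrow> {e \<in> E. a \<in> e} \<inter> {e \<in> E. c \<in> e} = {}"
  proof (intro ballI impI)
    fix a c assume ac: "a \<in> Z" "c \<in> Z" "a \<noteq> c"
    show "{e \<in> E. a \<in> e} \<inter> {e \<in> E. c \<in> e} = {}"
    proof (rule ccontr)
      assume "{e \<in> E. a \<in> e} \<inter> {e \<in> E. c \<in> e} \<noteq> {}"
      then obtain e where e: "e \<in> E" "a \<in> e" "c \<in> e" by blast
      then obtain p q where pq: "e = {p,q}" using g unfolding graph_def by blast
      hence "e = {c,a}" using e ac(3) by auto
      hence ce: "{c,a} \<in> E" using e(1) by simp
      have "a \<in> X" using ac Z by blast
      hence "c \<in> Y" using bip_edge_other[OF b _ ce] by blast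
      moreover have "c \<in> X" using ac Z by blast
      ultimately show False using bipD(2)[OF b] by blast
    qed
  qed
  have fin: "\<forall>z\<in>Z. finite {e \<in> E. z \<in> e}" using graph_finE[OF g] by simp
  have "card (\<Union>z\<in>Z. {e \<in> E. z \<in> e}) = (\<Sum>z\<in>Z. card {e \<in> E. z \<in> e})"
    using card_UN_disjoint[OF fZ fin disj] .
  also have "\<dots> = (\<Sum>z\<in>Z. 3)"
  proof (rule sum.cong)
    fix z assume "z \<in> Z"
    thus "card {e \<in> E. z \<in> e} = 3" using star_card[OF g] bipD(5)[OF b] Z by auto
  qed simp
  finally show ?thesis using eq by simp
qed

lemma bip_cover_bound:
  assumes b: "bip V E X Y" and c: "cover E K" and fK: "finite K"
  shows "card X \<le> card K \<and> (card K = card X \<longrightarrow> X \<subseteq> K)"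
proof -
  have g: "graph V E" and ac: "\<not> (\<exists>xs. is_cycle E xs)" using bipD[OF b] by auto
  have fV: "finite V" using g unfolding graph_def by blast
  have XV: "X \<subseteq> V" and YV: "Y \<subseteq> V" and XY: "X \<inter> Y = {}" using bipD(2,3)[OF b] by auto
  have fX: "finite X" using finite_subset[OF XV fV] .
  let ?X0 = "X - K"
  let ?N = "\<Union>x\<in>?X0. nbrs E x"
  have NKY: "?N \<subseteq> K \<inter> Y"
  proof
    fix y assume "y \<in> ?N"
    then obtain x where x: "x \<in> ?X0" "y \<in> nbrs E x" by blast
    hence e: "{y,x} \<in> E" unfolding nbrs_def by simp
    hence "{y,x} \<inter> K \<noteq> {}" using c unfolding cover_def by blast
    hence "y \<in> K" using x by blast
    moreover have "y \<in> Y" using bip_edge_other[OF b _ e] x by blast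
    ultimately show "y \<in> K \<inter> Y" by blast
  qed
  have ineq: "card X + card ?X0 \<le> card K"
  proof (cases "?X0 = {}")
    case True
    hence "X \<subseteq> K" by blast
    hence "card X \<le> card K" using fK by (simp add: card_mono)
    moreover have "card (X - K) = 0" using True by (metis card.empty)
    ultimately show ?thesis by simp
  next
    case False
    let ?EH = "{e \<in> E. e \<inter> ?X0 \<noteq> {}}"
    have cEH: "card ?EH = 3 * card ?X0" using bip_stars[OF b, of ?X0] by blast
    have gH: "graph (?X0 \<union> ?N) ?EH" unfolding graph_def
    proof (intro conjI ballI)
      have "?N \<subseteq> V" using NKY YV by blast
      hence "finite ?N" using finite_subset fV by auto
      thus "finite (?X0 \<union> ?N)" using fX by simp
    next
      fix e assume e: "e \<in> ?EH"
      then obtain x y where xy: "x \<in> X" "y \<in> Y" "e = {x,y}" using bipD(4)[OF b] by blast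
      have "y \<notin> ?X0" using xy XY by blast
      hence x0: "x \<in> ?X0" using e xy by blast
      have "y \<in> nbrs E x" using e xy unfolding nbrs_def by (simp add: insert_commute)
      hence "y \<in> ?N" using x0 by blast
      moreover have "x \<noteq> y" using xy XY by blast
      ultimately show "\<exists>u v. e = {u, v} \<and> u \<noteq> v \<and> u \<in> ?X0 \<union> ?N \<and> v \<in> ?X0 \<union> ?N"
        using xy x0 by blast
    qed
    have acH: "\<not> (\<exists>xs. is_cycle ?EH xs)" using acyc_sub[OF ac, of ?EH] by blast
    have "card ?EH + 1 \<le> card (?X0 \<union> ?N)" using forest_card[OF gH acH] False by blast
    also have "\<dots> \<le> card ?X0 + card ?N" by (rule card_Un_le)
    finally have N: "2 * card ?X0 + 1 \<le> card ?N" using cEH by simp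
    have fK': "finite (X \<inter> K)" using fX by simp
    have "?N \<subseteq> K" using NKY by blast
    hence fN: "finite ?N" using finite_subset fK by auto
    have "X \<inter> K \<inter> ?N = {}" using NKY XY by blast
    hence "card ((X \<inter> K) \<union> ?N) = card (X \<inter> K) + card ?N" using card_Un_disjoint[OF fK' fN] by blast
    moreover have "(X \<inter> K) \<union> ?N \<subseteq> K" using NKY by blast
    ultimately have "card (X \<inter> K) + card ?N \<le> card K" using fK by (metis card_mono)
    moreover have "card X = card (X \<inter> K) + card ?X0"
      using fX by (rule card_Int_Diff)
    ultimately show ?thesis using N by linarith
  qed
  show ?thesis
  proof
    show "card X \<le> card K" using ineq by linarith
    show "card K = card X \<longrightarrow> X \<subseteq> K"
    proof
      assume "card K = card X"
      hence "card (X - K) = 0" using ineq by linarith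
      moreover have "finite (X - K)" using fX by simp
      ultimately have "X - K = {}" by simp
      thus "X \<subseteq> K" by blast
    qed
  qed
qed

lemma bip_facts:
  assumes b: "bip V E X Y"
  shows "nu E = card X" and "D_set V E = Y" and "A_set V E = X" and "card V = 3 * card X + 1"
    and "class_T V E"
proof -
  have t: "tree V E" using bipD(1)[OF b] .
  have g: "graph V E" and ac: "\<not> (\<exists>xs. is_cycle E xs)" using t unfolding tree_def by auto
  have fE: "finite E" using graph_finE[OF g] .
  have fV: "finite V" using g unfolding graph_def by blast
  have XV: "X \<subseteq> V" and YV: "Y \<subseteq> V" and XY: "X \<inter> Y = {}" and XYV: "X \<union> Y = V" using bipD(2,3)[OF b] by auto
  have fX: "finite X" using finite_subset[OF XV fV] .
  have cX: "cover E X" unfolding cover_def using bipD(4)[OF b] by blast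
  obtain K where K: "cover E K" "finite K" "card K \<le> nu E" using konig[OF g ac] by blast
  have "nu E \<le> card X" using cover_ge_nu[OF fE cX fX] .
  moreover have "card X \<le> card K" using bip_cover_bound[OF b K(1,2)] by blast
  ultimately show nuX: "nu E = card X" using K(3) by linarith
  have mincov: "cover E K' \<and> finite K' \<and> card K' = nu E \<longleftrightarrow> K' = X" for K'
  proof
    assume a: "cover E K' \<and> finite K' \<and> card K' = nu E"
    hence "X \<subseteq> K'" using bip_cover_bound[OF b] nuX by auto
    thus "K' = X" using a nuX by (metis card_subset_eq)
  next
    assume "K' = X" thus "cover E K' \<and> finite K' \<and> card K' = nu E" using cX fX nuX by simp
  qed
  show DY: "D_set V E = Y"
  proof (rule set_eqI)
    fix v
    show "v \<in> D_set V E \<longleftrightarrow> v \<in> Y"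
      unfolding D_char[OF g ac] using mincov XY XYV by blast
  qed
  show AX: "A_set V E = X"
  proof (rule set_eqI, rule iffI)
    fix x assume "x \<in> A_set V E"
    then obtain y where y: "y \<in> Y" "x \<in> nbrs E y" "x \<notin> Y" unfolding A_set_def DY by blast
    thus "x \<in> X" using bip_edge_otherY[OF b y(1)] unfolding nbrs_def by blast
  next
    fix x assume x: "x \<in> X"
    hence "card (nbrs E x) = 3" using bipD(5)[OF b] unfolding deg_def by blast
    hence "nbrs E x \<noteq> {}" by auto
    then obtain y where "y \<in> nbrs E x" by blast
    hence e: "{y,x} \<in> E" unfolding nbrs_def by simp
    hence "y \<in> Y" using bip_edge_other[OF b x] by blast
    moreover have "x \<in> nbrs E y" using e unfolding nbrs_def by (simp add: insert_commute)
    moreover have "x \<notin> Y" using x XY by blast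
    ultimately show "x \<in> A_set V E" unfolding A_set_def DY by blast
  qed
  have "{e \<in> E. e \<inter> X \<noteq> {}} = E" using cX unfolding cover_def by blast
  hence cE: "card E = 3 * card X" using bip_stars[OF b, of X] by simp
  show cV: "card V = 3 * card X + 1" using tree_card[OF t] cE by simp
  show "class_T V E" unfolding class_T_def
  proof (intro conjI)
    show "tree V E" using t .
    show "\<forall>v\<in>A_set V E. deg E v \<le> 3" using bipD(5)[OF b] AX by simp
    show "real (nu E) = (real (card V) - 1) / 3" using nuX cV by simp
  qed
qed



lemma graph_card_edge: "graph V E \<Longrightarrow> e \<in> E \<Longrightarrow> card e = 2"
proof -
  assume g: "graph V E" and e: "e \<in> E"
  then obtain u v where "e = {u,v}" "u \<noteq> v" using g unfolding graph_def by blast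
  thus "card e = 2" by simp
qed

lemma card_ge1: "finite X \<Longrightarrow> x \<in> X \<Longrightarrow> card X \<ge> 1"
proof -
  assume "finite X" "x \<in> X"
  hence "card X > 0" using card_gt_0_iff by blast
  thus ?thesis by simp
qed

lemma mincover_exists:
  assumes g: "graph V E" and ac: "\<not> (\<exists>xs. is_cycle E xs)"
  shows "\<exists>K. cover E K \<and> finite K \<and> card K = nu E \<and> K \<subseteq> V"
proof -
  have fE: "finite E" using graph_finE[OF g] .
  obtain K0 where K0: "cover E K0" "finite K0" "card K0 \<le> nu E" using konig[OF g ac] by blast
  have c: "cover E (K0 \<inter> V)" unfolding cover_def
  proof
    fix e assume e: "e \<in> E"
    then obtain u v where uv: "e = {u,v}" "u \<in> V" "v \<in> V" using g unfolding graph_def by blast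
    have "e \<inter> K0 \<noteq> {}" using K0(1) e unfolding cover_def by blast
    thus "e \<inter> (K0 \<inter> V) \<noteq> {}" using uv by blast
  qed
  have f: "finite (K0 \<inter> V)" using K0(2) by simp
  have "card (K0 \<inter> V) \<le> card K0" using K0(2) by (simp add: card_mono)
  moreover have "nu E \<le> card (K0 \<inter> V)" using cover_ge_nu[OF fE c f] .
  ultimately have "card (K0 \<inter> V) = nu E" using K0(3) by linarith
  thus ?thesis using c f by (intro exI[of _ "K0 \<inter> V"]) simp
qed

lemma classT_bip:
  assumes cT: "class_T V E"
  shows "bip V E (A_set V E) (D_set V E)"
proof -
  have t: "tree V E" using cT unfolding class_T_def by blast
  have g: "graph V E" and ac: "\<not> (\<exists>xs. is_cycle E xs)" and cn: "connected_graph V E"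
    using t unfolding tree_def by auto
  have fE: "finite E" using graph_finE[OF g] .
  have fV: "finite V" using g unfolding graph_def by blast
  define D where "D = D_set V E"
  define A where "A = A_set V E"
  define C where "C = V - A - D"
  have Adeg: "\<And>a. a \<in> A \<Longrightarrow> deg E a \<le> 3" using cT unfolding class_T_def A_def by blast
  have req: "real (nu E) = (real (card V) - 1) / 3" using cT unfolding class_T_def by blast
  hence "3 * real (nu E) + 1 = real (card V)" by simp
  hence nuV: "3 * nu E + 1 = card V" by linarith
  have DV: "D \<subseteq> V" unfolding D_def D_set_def by blast
  have Dchar: "\<And>v. v \<in> D \<longleftrightarrow> v \<in> V \<and> (\<forall>K. cover E K \<and> finite K \<and> card K = nu E \<longrightarrow> v \<notin> K)"
    unfolding D_def using D_char[OF g ac] by blast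
  obtain K where K: "cover E K" "finite K" "card K = nu E" "K \<subseteq> V" using mincover_exists[OF g ac] by blast
  have Dind: "d' \<notin> D" if H: "{d,d'} \<in> E" "d \<in> D" for d d'
  proof
    assume "d' \<in> D"
    have "{d,d'} \<inter> K \<noteq> {}" using K(1) H(1) unfolding cover_def by blast
    moreover have "d \<notin> K" "d' \<notin> K" using Dchar H(2) \<open>d' \<in> D\<close> K by blast+
    ultimately show False by blast
  qed
  have AinK: "a \<in> K'" if H: "a \<in> A" "cover E K'" "finite K'" "card K' = nu E" for a K'
  proof -
    obtain d where d: "d \<in> D" "a \<in> nbrs E d" using H(1) unfolding A_def A_set_def D_def by blast
    hence e: "{a,d} \<in> E" unfolding nbrs_def by simp
    hence "{a,d} \<inter> K' \<noteq> {}" using H(2) unfolding cover_def by blast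
    moreover have "d \<notin> K'" using Dchar d(1) H(2-4) by blast
    ultimately show "a \<in> K'" by blast
  qed
  have AD: "A \<inter> D = {}" unfolding A_def A_set_def D_def by blast
  have DnbrA: "u \<in> A" if H: "{u,d} \<in> E" "d \<in> D" for u d
  proof -
    have "{d,u} \<in> E" using H(1) by (simp add: insert_commute)
    hence "u \<notin> D" using Dind H(2) by blast
    moreover have "u \<in> nbrs E d" using H(1) unfolding nbrs_def by simp
    ultimately show "u \<in> A" using H(2) unfolding A_def A_set_def D_def by blast
  qed
  have AV: "A \<subseteq> V"
  proof
    fix a assume "a \<in> A"
    then obtain d where "a \<in> nbrs E d" unfolding A_def A_set_def by blast
    hence "{a,d} \<in> E" unfolding nbrs_def by simp
    thus "a \<in> V" using graph_edge[OF g] by blast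
  qed
  have fA: "finite A" using finite_subset[OF AV fV] .
  have fD: "finite D" using finite_subset[OF DV fV] .
  have fC: "finite C" unfolding C_def using fV by simp
  have classify: "e \<subseteq> C" if H: "e \<in> E" "e \<inter> A = {}" for e
  proof -
    obtain u v where uv: "e = {u,v}" "u \<in> V" "v \<in> V" using g H(1) unfolding graph_def by blast
    have "u \<notin> D"
    proof
      assume "u \<in> D"
      hence "v \<in> A" using DnbrA[of v u] H(1) uv(1) by (simp add: insert_commute)
      thus False using H(2) uv(1) by blast
    qed
    moreover have "v \<notin> D"
    proof
      assume "v \<in> D"
      hence "u \<in> A" using DnbrA[of u v] H(1) uv(1) by simp
      thus False using H(2) uv(1) by blast
    qed
    ultimately show "e \<subseteq> C" using uv H(2) unfolding C_def by blast
  qed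
  define EC where "EC = {e \<in> E. e \<subseteq> C}"
  define EA where "EA = {e \<in> E. e \<inter> A \<noteq> {}}"
  have EU: "E = EA \<union> EC" unfolding EA_def EC_def using classify by blast
  have fEC: "finite EC" unfolding EC_def using fE by simp
  have fEA: "finite EA" unfolding EA_def using fE by simp
  have gC: "graph C EC" unfolding graph_def
  proof (intro conjI ballI)
    show "finite C" using fC .
  next
    fix e assume e: "e \<in> EC"
    then obtain u v where "e = {u,v}" "u \<noteq> v" using g unfolding graph_def EC_def by blast
    thus "\<exists>u v. e = {u, v} \<and> u \<noteq> v \<and> u \<in> C \<and> v \<in> C" using e unfolding EC_def by blast
  qed
  have acC: "\<not> (\<exists>xs. is_cycle EC xs)" using acyc_sub[OF ac, of EC] unfolding EC_def by blast
  have cEA: "card EA \<le> (\<Sum>a\<in>A. deg E a)"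
  proof -
    have "EA = (\<Union>a\<in>A. {e \<in> E. a \<in> e})" unfolding EA_def by blast
    hence "card EA \<le> (\<Sum>a\<in>A. card {e \<in> E. a \<in> e})" using card_UN_le[OF fA] by simp
    thus ?thesis using star_card[OF g] by simp
  qed
  have sdeg: "(\<Sum>a\<in>A. deg E a) \<le> 3 * card A"
  proof -
    have "(\<Sum>a\<in>A. deg E a) \<le> (\<Sum>a\<in>A. 3)" using Adeg by (intro sum_mono) blast
    thus ?thesis by simp
  qed
  have KD: "K \<inter> D = {}" using Dchar K by blast
  have AK: "A \<subseteq> K" using AinK K by blast
  have KAC: "K \<subseteq> A \<union> C" using K(4) KD unfolding C_def by blast
  have AC: "A \<inter> C = {}" unfolding C_def by blast
  have cK: "card K = card A + card (K \<inter> C)"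
  proof -
    have "K = A \<union> (K \<inter> C)" using AK KAC by blast
    moreover have "card (A \<union> (K \<inter> C)) = card A + card (K \<inter> C)"
      using card_Un_disjoint[OF fA] fC AC by blast
    ultimately show ?thesis by simp
  qed
  have coverC: "cover EC (K' \<inter> C)" if H: "cover E K'" for K'
    unfolding cover_def
  proof
    fix e assume e: "e \<in> EC"
    hence "e \<inter> K' \<noteq> {}" using H unfolding cover_def EC_def by blast
    thus "e \<inter> (K' \<inter> C) \<noteq> {}" using e unfolding EC_def by blast
  qed
  have nuEC_le: "nu EC \<le> card (K \<inter> C)" using cover_ge_nu[OF fEC coverC[OF K(1)]] fC by simp
  obtain MC where MC: "matching EC MC" "card MC = nu EC" using nu_ex[OF fEC] by blast
  have mmC: "max_matching EC MC" using MC unfolding max_matching_def by simp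
  have lowEC: "nu E \<le> card A + nu EC"
  proof -
    obtain K2 where K2: "cover EC K2" "finite K2" "card K2 \<le> nu EC" using konig[OF gC acC] by blast
    have "cover E (A \<union> K2)" unfolding cover_def
    proof
      fix e assume e: "e \<in> E"
      show "e \<inter> (A \<union> K2) \<noteq> {}"
      proof (cases "e \<inter> A = {}")
        case True
        hence "e \<in> EC" using classify e unfolding EC_def by blast
        thus ?thesis using K2(1) unfolding cover_def by blast
      next
        case False thus ?thesis by blast
      qed
    qed
    hence "nu E \<le> card (A \<union> K2)" using cover_ge_nu[OF fE] fA K2(2) by simp
    also have "\<dots> \<le> card A + card K2" by (rule card_Un_le)
    finally show ?thesis using K2(3) by linarith
  qed
  have CM: "C \<subseteq> \<Union>MC"
  proof
    fix c assume c: "c \<in> C"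
    hence "c \<notin> D" "c \<in> V" unfolding C_def by auto
    then obtain Kc where Kc: "cover E Kc" "finite Kc" "card Kc = nu E" "c \<in> Kc" using Dchar by blast
    have cov: "cover EC (Kc \<inter> C)" using coverC[OF Kc(1)] .
    have fKc: "finite (Kc \<inter> C)" using Kc(2) by simp
    have "A \<subseteq> Kc" using AinK Kc by blast
    hence "A \<union> (Kc \<inter> C) \<subseteq> Kc" by blast
    hence "card (A \<union> (Kc \<inter> C)) \<le> card Kc" using Kc(2) by (simp add: card_mono)
    moreover have "card (A \<union> (Kc \<inter> C)) = card A + card (Kc \<inter> C)"
      using card_Un_disjoint[OF fA fKc] AC by blast
    ultimately have "card (Kc \<inter> C) \<le> nu E - card A" using Kc(3) by linarith
    moreover have "nu EC \<le> card (Kc \<inter> C)" using cover_ge_nu[OF fEC cov fKc] .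
    ultimately have "card (Kc \<inter> C) = nu EC" using lowEC by linarith
    thus "c \<in> \<Union>MC" using mincover_matched[OF fEC mmC cov fKc] c Kc(4) by blast
  qed
  have MCsub: "\<Union>MC \<subseteq> C" using MC(1) unfolding matching_def EC_def by blast
  have fMC: "finite MC" using matching_fin[OF fEC MC(1)] .
  have cU: "card (\<Union>MC) = 2 * card MC"
  proof -
    have "\<forall>e\<in>MC. finite e"
    proof
      fix e assume "e \<in> MC"
      hence "e \<subseteq> C" using MCsub by blast
      thus "finite e" using fC finite_subset by auto
    qed
    moreover have "\<forall>e1\<in>MC. \<forall>e2\<in>MC. e1 \<noteq> e2 \<longrightarrow> e1 \<inter> e2 = {}" using MC(1) unfolding matching_def by blast
    moreover have "pairwise disjnt MC" using calculation(2) unfolding pairwise_def disjnt_def by blast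
    ultimately have "card (\<Union>MC) = (\<Sum>e\<in>MC. card e)" using card_Union_disjoint[of MC] by blast
    also have "\<dots> = (\<Sum>e\<in>MC. 2)"
    proof (rule sum.cong)
      fix e assume "e \<in> MC"
      hence "e \<in> E" using MC(1) unfolding matching_def EC_def by blast
      thus "card e = 2" using graph_card_edge[OF g] by blast
    qed simp
    finally show ?thesis by simp
  qed
  have cC: "card C = 2 * nu EC" using CM MCsub cU MC(2) by (metis subset_antisym)
  have partV: "card V = card A + card C + card D"
  proof -
    have "V = A \<union> C \<union> D" using AV DV unfolding C_def by blast
    moreover have "card (A \<union> C \<union> D) = card (A \<union> C) + card D"
      using card_Un_disjoint[of "A \<union> C" D] fA fC fD AD unfolding C_def by blast
    moreover have "card (A \<union> C) = card A + card C" using card_Un_disjoint[OF fA fC] AC by blast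
    ultimately show ?thesis by simp
  qed
  have cE: "card E + 1 = card V" using tree_card[OF t] .
  have cEle: "card E \<le> card EA + card EC" using EU card_Un_le by metis
  have Cemp: "C = {}"
  proof (rule ccontr)
    assume "C \<noteq> {}"
    hence "card EC + 1 \<le> card C" using forest_card[OF gC acC] by blast
    thus False using cEle cEA sdeg cE nuV cC nuEC_le cK K(3) by linarith
  qed
  have ECemp: "EC = {}"
  proof -
    have "\<forall>e\<in>EC. e = {}" unfolding EC_def Cemp by blast
    moreover have "\<forall>e\<in>EC. e \<noteq> {}" unfolding EC_def using graph_card_edge[OF g] by fastforce
    ultimately show ?thesis by blast
  qed
  have KA: "K = A" using AK KAC Cemp by blast
  have nuA: "nu E = card A" using K(3) KA by simp
  have EEA: "E = EA" using EU ECemp by simp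
  have cE3: "card E = 3 * card A" using cE nuV nuA by linarith
  have cEA_E: "card EA = card E" using EEA by simp
  have deg3: "deg E a = 3" if a: "a \<in> A" for a
  proof (rule ccontr)
    assume "deg E a \<noteq> 3"
    hence lt: "deg E a \<le> 2" using Adeg[OF a] by linarith
    have "(\<Sum>b\<in>A. deg E b) = deg E a + (\<Sum>b\<in>A - {a}. deg E b)" using sum.remove[OF fA a] .
    also have "(\<Sum>b\<in>A - {a}. deg E b) \<le> (\<Sum>b\<in>A - {a}. 3)" using Adeg by (intro sum_mono) blast
    also have "(\<Sum>b\<in>A - {a}. 3::nat) = 3 * (card A - 1)" using a fA by simp
    finally have "(\<Sum>b\<in>A. deg E b) \<le> 2 + 3 * (card A - 1)" using lt by linarith
    moreover have "card A \<ge> 1" using card_ge1[OF fA a] .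
    ultimately show False using cEA cEA_E cE3 by linarith
  qed
  have Aind: "a' \<notin> A" if H: "{a,a'} \<in> E" "a \<in> A" for a a'
  proof
    assume a': "a' \<in> A"
    define S1 where "S1 = {e \<in> E. a \<in> e}"
    define S2 where "S2 = (\<Union>b\<in>A - {a}. {e \<in> E. b \<in> e})"
    have aa: "a \<noteq> a'" using graph_edge[OF g H(1)] by simp
    have "EA = S1 \<union> S2"
    proof (rule set_eqI, rule iffI)
      fix e assume "e \<in> EA"
      then obtain b where b: "e \<in> E" "b \<in> e" "b \<in> A" unfolding EA_def by blast
      show "e \<in> S1 \<union> S2"
      proof (cases "b = a")
        case True thus ?thesis using b unfolding S1_def by blast
      next
        case False
        hence "b \<in> A - {a}" using b by blast
        thus ?thesis using b unfolding S2_def by blast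
      qed
    next
      fix e assume "e \<in> S1 \<union> S2"
      thus "e \<in> EA" unfolding S1_def S2_def EA_def using H(2) by blast
    qed
    have fS1: "finite S1" unfolding S1_def using fE by simp
    have fS2: "finite S2" unfolding S2_def using fE fA by simp
    have i1: "{a,a'} \<in> S1" unfolding S1_def using H(1) by simp
    have "a' \<in> A - {a}" using aa a' by simp
    hence i2: "{a,a'} \<in> S2" unfolding S2_def using H(1) by blast
    have i3: "{a,a'} \<in> S1 \<inter> S2" using i1 i2 by (rule IntI)
    have "finite (S1 \<inter> S2)" using fS1 by simp
    hence "card (S1 \<inter> S2) \<ge> 1" using card_ge1 i3 by metis
    moreover have "card S1 + card S2 = card (S1 \<union> S2) + card (S1 \<inter> S2)" using card_Un_Int[OF fS1 fS2] .
    moreover have "card S1 = 3" unfolding S1_def using star_card[OF g, of a] deg3[OF H(2)] by simp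
    moreover have "card S2 \<le> 3 * (card A - 1)"
    proof -
      have fAa: "finite (A - {a})" using fA by simp
      have "card S2 \<le> (\<Sum>b\<in>A - {a}. card {e \<in> E. b \<in> e})" unfolding S2_def by (rule card_UN_le[OF fAa])
      also have "\<dots> = (\<Sum>b\<in>A - {a}. 3)"
      proof (rule sum.cong)
        fix b assume "b \<in> A - {a}"
        hence "deg E b = 3" using deg3 by blast
        thus "card {e \<in> E. b \<in> e} = 3" using star_card[OF g, of b] by simp
      qed simp
      also have "\<dots> = 3 * (card A - 1)" using H(2) fA by simp
      finally show ?thesis .
    qed
    moreover have "card A \<ge> 1" using card_ge1[OF fA H(2)] .
    moreover have "card (S1 \<union> S2) = card E" using \<open>EA = S1 \<union> S2\<close> cEA_E by simp
    ultimately show False using cE3 by linarith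
  qed
  show ?thesis unfolding bip_def A_def[symmetric] D_def[symmetric]
  proof (intro conjI ballI)
    show "tree V E" using t .
    show "A \<inter> D = {}" using AD .
    show "A \<union> D = V" using AV DV Cemp unfolding C_def by blast
  next
    fix x assume "x \<in> A" thus "deg E x = 3" using deg3 by blast
  next
    fix e assume e: "e \<in> E"
    then obtain u v where uv: "e = {u,v}" "u \<in> V" "v \<in> V" using g unfolding graph_def by blast
    have VAD: "V = A \<union> D" using AV DV Cemp unfolding C_def by blast
    show "\<exists>x\<in>A. \<exists>y\<in>D. e = {x, y}"
    proof (cases "u \<in> D")
      case True
      hence "v \<in> A" using DnbrA[of v u] e uv(1) by (simp add: insert_commute)
      thus ?thesis using True uv(1) by (auto simp: insert_commute)
    next
      case False
      hence uA: "u \<in> A" using uv VAD by blast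
      hence "v \<notin> A" using Aind e uv(1) by blast
      hence "v \<in> D" using uv VAD by blast
      thus ?thesis using uA uv(1) by blast
    qed
  qed
qed



lemma rtrancl_map_edges:
  assumes "(adj E)\<^sup>*\<^sup>* x y" and "\<And>a b. {a,b} \<in> E \<Longrightarrow> (adj F)\<^sup>*\<^sup>* (f a) (f b)"
  shows "(adj F)\<^sup>*\<^sup>* (f x) (f y)"
  using assms(1)
proof (induction rule: rtranclp_induct)
  case base then show ?case by simp
next
  case (step y z) then show ?case using assms(2)[of y z] by (meson rtranclp_trans)
qed

lemma gedge: "graph V E \<Longrightarrow> e \<in> E \<Longrightarrow> \<exists>u v. e = {u,v} \<and> u \<noteq> v \<and> u \<in> V \<and> v \<in> V"
  unfolding graph_def by blast

locale ctr =
  fixes V :: "'a set" and E :: "'a set set" and A D :: "'a set"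
    and v1 v2 u1 u2 u3 u4 u5 w :: 'a and S :: "'a set"
  assumes b: "bip V E A D"
    and v1A: "v1 \<in> A" and v2A: "v2 \<in> A" and v12: "v1 \<noteq> v2"
    and n1: "nbrs E v1 = {u1, u2, u5}" and n2: "nbrs E v2 = {u3, u4, u5}"
    and du: "distinct [u1, u2, u3, u4, u5]"
    and wV: "w \<notin> V"
    and Sdef: "S = {v1, v2} \<union> nbrs E v1 \<union> nbrs E v2"
begin

lemma g: "graph V E" using bipD(6)[OF b] .
lemma t: "tree V E" using bipD(1)[OF b] .
lemma fV: "finite V" using g unfolding graph_def by blast
lemma fE: "finite E" using graph_finE[OF g] .
lemma AD: "A \<inter> D = {}" using bipD(2)[OF b] .
lemma ADV: "A \<union> D = V" using bipD(3)[OF b] .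

lemma e1: "{u1,v1} \<in> E" "{u2,v1} \<in> E" "{u5,v1} \<in> E" using n1 unfolding nbrs_def by blast+
lemma e2: "{u3,v2} \<in> E" "{u4,v2} \<in> E" "{u5,v2} \<in> E" using n2 unfolding nbrs_def by blast+

lemma uD: "u1 \<in> D" "u2 \<in> D" "u3 \<in> D" "u4 \<in> D" "u5 \<in> D"
  using bip_edge_other[OF b v1A e1(1)] bip_edge_other[OF b v1A e1(2)] bip_edge_other[OF b v1A e1(3)]
    bip_edge_other[OF b v2A e2(1)] bip_edge_other[OF b v2A e2(2)] by auto

lemma vnu: "v1 \<notin> {u1,u2,u3,u4,u5}" "v2 \<notin> {u1,u2,u3,u4,u5}"
  using uD v1A v2A AD by blast+

lemma S_eq: "S = {v1,v2,u1,u2,u3,u4,u5}" using Sdef n1 n2 by auto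

lemma SV: "S \<subseteq> V"
proof -
  have "v1 \<in> V" "v2 \<in> V" using v1A v2A ADV by auto
  moreover have "u1 \<in> V" "u2 \<in> V" "u3 \<in> V" "u4 \<in> V" "u5 \<in> V" using uD ADV by auto
  ultimately show ?thesis using S_eq by simp
qed

lemma cS: "card S = 7"
  using S_eq du vnu v12 by simp

lemma SA: "S \<inter> A = {v1, v2}" using S_eq uD AD v1A v2A by auto

lemma SD: "D - S = D - (nbrs E v1 \<union> nbrs E v2)" using n1 n2 S_eq v1A v2A AD by auto

lemma cross_u: "y \<in> {u1,u2,u3,u4,u5}" if "x \<notin> S" "y \<in> S" "{x,y} \<in> E" for x y
proof -
  have "y \<noteq> v1"
  proof
    assume "y = v1"
    hence "x \<in> nbrs E v1" using that(3) unfolding nbrs_def by simp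
    thus False using that(1) Sdef by blast
  qed
  moreover have "y \<noteq> v2"
  proof
    assume "y = v2"
    hence "x \<in> nbrs E v2" using that(3) unfolding nbrs_def by simp
    thus False using that(1) Sdef by blast
  qed
  ultimately show ?thesis using that(2) S_eq by blast
qed

lemma cross_A: "x \<in> A" if "x \<notin> S" "y \<in> S" "{x,y} \<in> E" for x y
proof -
  have "y \<in> D" using cross_u[OF that] uD by blast
  thus ?thesis using bip_edge_otherY[OF b _ that(3)] by blast
qed

definition Eout where "Eout = {e \<in> E. e \<inter> S = {}}"
definition W where "W = {{w, x} | x. x \<in> V - S \<and> (\<exists>y\<in>S. {x, y} \<in> E)}"
definition V' where "V' = (V - S) \<union> {w}"
definition E' where "E' = Eout \<union> W"

lemma V'_eq: "contract_V V S w = V'" unfolding contract_V_def V'_def by simp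
lemma E'_eq: "contract_E V E S w = E'" unfolding contract_E_def E'_def Eout_def W_def by simp

lemma graph': "graph V' E'"
  unfolding graph_def
proof (intro conjI ballI)
  show "finite V'" unfolding V'_def using fV by simp
next
  fix e assume "e \<in> E'"
  hence "e \<in> Eout \<or> e \<in> W" unfolding E'_def by blast
  thus "\<exists>u v. e = {u, v} \<and> u \<noteq> v \<and> u \<in> V' \<and> v \<in> V'"
  proof
    assume e: "e \<in> Eout"
    hence "e \<in> E" unfolding Eout_def by simp
    then obtain p q where pq: "e = {p,q}" "p \<noteq> q" "p \<in> V" "q \<in> V" using gedge[OF g] by blast
    have "p \<notin> S" "q \<notin> S" using e pq(1) unfolding Eout_def by auto
    thus ?thesis using pq unfolding V'_def by (intro exI[of _ p] exI[of _ q]) simp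
  next
    assume "e \<in> W"
    then obtain x where x: "e = {w,x}" "x \<in> V - S" unfolding W_def by blast
    have "w \<noteq> x" using x wV by blast
    thus ?thesis using x unfolding V'_def by (intro exI[of _ w] exI[of _ x]) simp
  qed
qed

definition f where "f x = (if x \<in> S then w else x)"

lemma conn': "connected_graph V' E'"
  unfolding connected_graph_def
proof (intro conjI ballI)
  show "V' \<noteq> {}" unfolding V'_def by blast
next
  fix a b assume ab: "a \<in> V'" "b \<in> V'"
  have edge: "(adj E')\<^sup>*\<^sup>* (f p) (f q)" if pq: "{p,q} \<in> E" for p q
  proof (cases "p \<in> S")
    case True
    show ?thesis
    proof (cases "q \<in> S")
      case True thus ?thesis using \<open>p \<in> S\<close> unfolding f_def by simp
    next
      case False
      have "q \<in> V" using graph_edge[OF g pq] by blast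
      moreover have "{q,p} \<in> E" using pq by (simp add: insert_commute)
      ultimately have "{w,q} \<in> W" unfolding W_def using False True by blast
      hence "adj E' w q" unfolding E'_def by simp
      thus ?thesis using True False unfolding f_def by (simp add: r_into_rtranclp)
    qed
  next
    case False
    show ?thesis
    proof (cases "q \<in> S")
      case True
      have "p \<in> V" using graph_edge[OF g pq] by blast
      hence "{w,p} \<in> W" unfolding W_def using False True pq by blast
      hence "adj E' p w" unfolding E'_def by (simp add: insert_commute)
      thus ?thesis using True False unfolding f_def by (simp add: r_into_rtranclp)
    next
      case True2: False
      have "{p,q} \<in> Eout" unfolding Eout_def using pq False True2 by blast
      hence "adj E' p q" unfolding E'_def by simp
      thus ?thesis using False True2 unfolding f_def by (simp add: r_into_rtranclp)
    qed
  qed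
  define a0 where "a0 = (if a = w then v1 else a)"
  define b0 where "b0 = (if b = w then v1 else b)"
  have v1S: "v1 \<in> S" using S_eq by simp
  have a0: "a0 \<in> V" "f a0 = a" using ab(1) SV v1S wV unfolding a0_def V'_def f_def by auto
  have b0: "b0 \<in> V" "f b0 = b" using ab(2) SV v1S wV unfolding b0_def V'_def f_def by auto
  have "(adj E)\<^sup>*\<^sup>* a0 b0" using bipD(8)[OF b] a0(1) b0(1) unfolding connected_graph_def by blast
  hence "(adj E')\<^sup>*\<^sup>* (f a0) (f b0)" using rtrancl_map_edges edge by metis
  thus "(adj E')\<^sup>*\<^sup>* a b" using a0 b0 by simp
qed


definition Ecr where "Ecr = {e \<in> E. e \<inter> S \<noteq> {} \<and> \<not> e \<subseteq> S}"
definition h where "h e = insert w (e - S)"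
definition Esix where "Esix = {{u1,v1},{u2,v1},{u5,v1},{u3,v2},{u4,v2},{u5,v2}}"

lemma W_img: "W = h ` Ecr"
proof (rule set_eqI, rule iffI)
  fix e assume "e \<in> W"
  then obtain x y where xy: "e = {w,x}" "x \<in> V - S" "y \<in> S" "{x,y} \<in> E" unfolding W_def by blast
  have "{x,y} \<in> Ecr" unfolding Ecr_def using xy by blast
  moreover have "h {x,y} = e" unfolding h_def using xy by auto
  ultimately show "e \<in> h ` Ecr" by blast
next
  fix e assume "e \<in> h ` Ecr"
  then obtain c where c: "c \<in> Ecr" "e = h c" by blast
  hence "c \<in> E" unfolding Ecr_def by simp
  then obtain p q where pq: "c = {p,q}" "p \<in> V" "q \<in> V" using gedge[OF g] by blast
  have cE: "c \<in> E" and cS: "c \<inter> S \<noteq> {}" and cnS: "\<not> c \<subseteq> S" using c(1) unfolding Ecr_def by auto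
  show "e \<in> W"
  proof (cases "p \<in> S")
    case True
    hence qS: "q \<notin> S" using cnS pq(1) by blast
    have "e = {w,q}" using c(2) pq(1) True qS unfolding h_def by auto
    moreover have "{q,p} \<in> E" using cE pq(1) by (simp add: insert_commute)
    ultimately show ?thesis unfolding W_def using qS pq(3) True by blast
  next
    case False
    hence qS: "q \<in> S" using cS pq(1) by blast
    have "e = {w,p}" using c(2) pq(1) False qS unfolding h_def by auto
    thus ?thesis unfolding W_def using qS pq(2) False cE pq(1) by blast
  qed
qed

lemma fEcr: "finite Ecr" unfolding Ecr_def using fE by simp
lemma fEout: "finite Eout" unfolding Eout_def using fE by simp
lemma fW: "finite W" using W_img fEcr by simp

lemma cW: "card W \<le> card Ecr" using W_img fEcr card_image_le by metis

lemma Esix_sub: "Esix \<subseteq> E" unfolding Esix_def using e1 e2 by simp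

lemma card_Esix: "card Esix = 6"
proof -
  have d: "u1 \<noteq> u2" "u1 \<noteq> u3" "u1 \<noteq> u4" "u1 \<noteq> u5" "u2 \<noteq> u3" "u2 \<noteq> u4" "u2 \<noteq> u5"
    "u3 \<noteq> u4" "u3 \<noteq> u5" "u4 \<noteq> u5" using du by auto
  have v: "v1 \<noteq> u1" "v1 \<noteq> u2" "v1 \<noteq> u3" "v1 \<noteq> u4" "v1 \<noteq> u5"
    "v2 \<noteq> u1" "v2 \<noteq> u2" "v2 \<noteq> u3" "v2 \<noteq> u4" "v2 \<noteq> u5" using vnu by auto
  show ?thesis unfolding Esix_def using d v v12 by (simp add: doubleton_eq_iff)
qed

lemma Esix_S: "e \<in> Esix \<Longrightarrow> e \<subseteq> S \<and> e \<noteq> {}" unfolding Esix_def using S_eq by auto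

lemma cardE_ge: "card Eout + card Ecr + 6 \<le> card E"
proof -
  have d1: "Eout \<inter> Ecr = {}" unfolding Eout_def Ecr_def by blast
  have d2: "(Eout \<union> Ecr) \<inter> Esix = {}"
  proof -
    have "\<forall>e\<in>Esix. e \<notin> Eout \<and> e \<notin> Ecr"
    proof
      fix e assume "e \<in> Esix"
      hence "e \<subseteq> S" "e \<noteq> {}" using Esix_S by auto
      thus "e \<notin> Eout \<and> e \<notin> Ecr" unfolding Eout_def Ecr_def by blast
    qed
    thus ?thesis by blast
  qed
  have fsix: "finite Esix" unfolding Esix_def by simp
  have "card (Eout \<union> Ecr \<union> Esix) = card (Eout \<union> Ecr) + card Esix"
    using card_Un_disjoint[OF _ fsix d2] fEout fEcr by simp
  moreover have "card (Eout \<union> Ecr) = card Eout + card Ecr" using card_Un_disjoint[OF fEout fEcr d1] .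
  moreover have "Eout \<union> Ecr \<union> Esix \<subseteq> E" using Esix_sub unfolding Eout_def Ecr_def by blast
  hence "card (Eout \<union> Ecr \<union> Esix) \<le> card E" using fE by (simp add: card_mono)
  ultimately show ?thesis using card_Esix by linarith
qed

lemma card_E': "card E' = card Eout + card W"
proof -
  have "Eout \<inter> W = {}"
  proof -
    have "\<forall>e\<in>W. w \<in> e" unfolding W_def by blast
    moreover have "\<forall>e\<in>Eout. e \<subseteq> V"
    proof
      fix e assume "e \<in> Eout"
      hence "e \<in> E" unfolding Eout_def by simp
      then obtain p q where "e = {p,q}" "p \<in> V" "q \<in> V" using gedge[OF g] by blast
      thus "e \<subseteq> V" by simp
    qed
    ultimately show ?thesis using wV by blast
  qed
  thus ?thesis unfolding E'_def using card_Un_disjoint[OF fEout fW] by blast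
qed

lemma card_V': "card V' + 6 = card V"
proof -
  have "card (V - S) = card V - 7" using card_Diff_subset[OF _ SV] cS fV finite_subset[OF SV fV] by simp
  moreover have "card V \<ge> 7" using card_mono[OF fV SV] cS by simp
  moreover have "card V' = card (V - S) + 1" unfolding V'_def using wV fV by simp
  ultimately show ?thesis by linarith
qed

lemma counts: "card E' + 1 = card V'" "card W = card Ecr"
proof -
  have ce: "card E + 1 = card V" using tree_card[OF t] .
  have "card V' \<le> card E' + 1" using conn_card[OF graph' conn'] .
  thus "card E' + 1 = card V'" "card W = card Ecr" using ce cardE_ge card_E' card_V' cW by linarith+
qed

lemma tree': "tree V' E'"
  unfolding tree_def using graph' conn' conn_acyclic[OF graph' conn'] counts(1) by simp

lemma inj_h: "inj_on h Ecr"
  using eq_card_imp_inj_on[OF fEcr] counts(2) W_img by simp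

lemma unique_S_nbr: "y = y'" if "x \<notin> S" "y \<in> S" "y' \<in> S" "{x,y} \<in> E" "{x,y'} \<in> E" for x y y'
proof -
  have a: "{x,y} \<in> Ecr" "{x,y'} \<in> Ecr" unfolding Ecr_def using that by blast+
  have "h {x,y} = h {x,y'}" unfolding h_def using that(1-3) by auto
  hence "{x,y} = {x,y'}" using inj_h a unfolding inj_on_def by blast
  thus ?thesis by (auto simp: doubleton_eq_iff)
qed


lemma nbrs_fin: "finite (nbrs E x)"
proof -
  have "nbrs E x \<subseteq> V" unfolding nbrs_def using graph_edge[OF g] by blast
  thus ?thesis using finite_subset fV by auto
qed

lemma nbrs'_eq:
  assumes x: "x \<in> V - S"
  shows "nbrs E' x = (nbrs E x - S) \<union> {y. y = w \<and> (\<exists>z\<in>S. {x,z} \<in> E)}"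
proof (rule set_eqI)
  fix y
  have xw: "x \<noteq> w" using x wV by blast
  have o: "{y,x} \<in> Eout \<longleftrightarrow> y \<in> nbrs E x \<and> y \<notin> S" unfolding Eout_def nbrs_def using x by auto
  have wq: "{y,x} \<in> W \<longleftrightarrow> y = w \<and> (\<exists>z\<in>S. {x,z} \<in> E)"
  proof
    assume "{y,x} \<in> W"
    then obtain x' z where xz: "{y,x} = {w,x'}" "x' \<in> V - S" "z \<in> S" "{x',z} \<in> E" unfolding W_def by blast
    have "y = w \<and> x = x'" using xz(1) xw by (auto simp: doubleton_eq_iff)
    thus "y = w \<and> (\<exists>z\<in>S. {x,z} \<in> E)" using xz by blast
  next
    assume "y = w \<and> (\<exists>z\<in>S. {x,z} \<in> E)"
    thus "{y,x} \<in> W" unfolding W_def using x by blast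
  qed
  have n: "y \<in> nbrs E' x \<longleftrightarrow> {y,x} \<in> Eout \<or> {y,x} \<in> W" unfolding nbrs_def E'_def by simp
  show "y \<in> nbrs E' x \<longleftrightarrow> y \<in> (nbrs E x - S) \<union> {y. y = w \<and> (\<exists>z\<in>S. {x,z} \<in> E)}"
    unfolding n o wq by blast
qed

lemma deg':
  assumes x: "x \<in> A - S"
  shows "deg E' x = 3"
proof -
  have xV: "x \<in> V - S" using x ADV by blast
  have d3: "card (nbrs E x) = 3" using bipD(5)[OF b] x unfolding deg_def by blast
  have split: "card (nbrs E x) = card (nbrs E x \<inter> S) + card (nbrs E x - S)" using card_Int_Diff[OF nbrs_fin] .
  show ?thesis
  proof (cases "\<exists>z\<in>S. {x,z} \<in> E")
    case True
    then obtain z where z: "z \<in> S" "{x,z} \<in> E" by blast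
    have "nbrs E x \<inter> S = {z}"
    proof (rule set_eqI, rule iffI)
      fix y assume "y \<in> nbrs E x \<inter> S"
      hence "{x,y} \<in> E" "y \<in> S" unfolding nbrs_def by (auto simp: insert_commute)
      thus "y \<in> {z}" using unique_S_nbr[of x y z] xV z by blast
    next
      fix y assume "y \<in> {z}"
      thus "y \<in> nbrs E x \<inter> S" using z unfolding nbrs_def by (auto simp: insert_commute)
    qed
    hence c1: "card (nbrs E x \<inter> S) = 1" by simp
    have eq: "nbrs E' x = insert w (nbrs E x - S)" using nbrs'_eq[OF xV] True by auto
    have "w \<notin> nbrs E x" unfolding nbrs_def using graph_edge[OF g] wV by blast
    hence "card (nbrs E' x) = card (nbrs E x - S) + 1" unfolding eq using nbrs_fin by simp
    thus ?thesis unfolding deg_def using d3 split c1 by linarith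
  next
    case False
    have "nbrs E x \<inter> S = {}"
    proof (rule ccontr)
      assume "nbrs E x \<inter> S \<noteq> {}"
      then obtain y where "y \<in> nbrs E x" "y \<in> S" by blast
      hence "{x,y} \<in> E" "y \<in> S" unfolding nbrs_def by (auto simp: insert_commute)
      thus False using False by blast
    qed
    moreover have "nbrs E' x = nbrs E x - S" using nbrs'_eq[OF xV] False by auto
    ultimately show ?thesis unfolding deg_def using d3 split by simp
  qed
qed

lemma bip': "bip V' E' (A - S) ((D - S) \<union> {w})"
  unfolding bip_def
proof (intro conjI ballI)
  show "tree V' E'" using tree' .
  show "(A - S) \<inter> ((D - S) \<union> {w}) = {}" using AD ADV wV by blast
  show "(A - S) \<union> ((D - S) \<union> {w}) = V'" unfolding V'_def using ADV by blast
next
  fix x assume "x \<in> A - S" thus "deg E' x = 3" using deg' by blast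
next
  fix e assume "e \<in> E'"
  hence "e \<in> Eout \<or> e \<in> W" unfolding E'_def by blast
  thus "\<exists>x\<in>A - S. \<exists>y\<in>(D - S) \<union> {w}. e = {x, y}"
  proof
    assume e: "e \<in> Eout"
    hence eE: "e \<in> E" and eS: "e \<inter> S = {}" unfolding Eout_def by auto
    obtain x y where xy: "x \<in> A" "y \<in> D" "e = {x,y}" using bipD(4)[OF b eE] by blast
    have "x \<notin> S" "y \<notin> S" using eS xy(3) by auto
    thus ?thesis using xy by blast
  next
    assume "e \<in> W"
    then obtain x z where xz: "e = {w,x}" "x \<in> V - S" "z \<in> S" "{x,z} \<in> E" unfolding W_def by blast
    have "x \<in> A" using cross_A[of x z] xz by blast
    hence "x \<in> A - S" using xz(2) by blast
    moreover have "e = {x,w}" using xz(1) by (simp add: insert_commute)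
    ultimately show ?thesis by blast
  qed
qed

end

theorem lemma4:
  fixes V :: "'a set" and E :: "'a set set"
    and v1 v2 u1 u2 u3 u4 u5 w :: 'a
  assumes "class_T V E"
    and "v1 \<in> A_set V E" and "v2 \<in> A_set V E" and "v1 \<noteq> v2"
    and "nbrs E v1 = {u1, u2, u5}" and "nbrs E v2 = {u3, u4, u5}"
    and "distinct [u1, u2, u3, u4, u5]"
    and "w \<notin> V"
    and "S = {v1, v2} \<union> nbrs E v1 \<union> nbrs E v2"
  shows "class_T (contract_V V S w) (contract_E V E S w)
       \<and> D_set (contract_V V S w) (contract_E V E S w)
           = {w} \<union> (D_set V E - (nbrs E v1 \<union> nbrs E v2))
       \<and> A_set (contract_V V S w) (contract_E V E S w) = A_set V E - {v1, v2}"
proof -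
  have b: "bip V E (A_set V E) (D_set V E)" using classT_bip[OF assms(1)] .
  interpret c: ctr V E "A_set V E" "D_set V E" v1 v2 u1 u2 u3 u4 u5 w S
    using b assms(2-9) by unfold_locales
  have b': "bip c.V' c.E' (A_set V E - S) ((D_set V E - S) \<union> {w})" using c.bip' .
  note F = bip_facts[OF b']
  have X: "A_set V E - S = A_set V E - {v1,v2}" using c.SA by blast
  have Y: "(D_set V E - S) \<union> {w} = {w} \<union> (D_set V E - (nbrs E v1 \<union> nbrs E v2))" using c.SD by blast
  show ?thesis unfolding c.V'_eq c.E'_eq using F(2,3,5) X Y by simp
qed


end
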